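(* On the subspace domain $\mathcal S(\mathcal H_V)$ with $(\alpha_s,\gamma_s)$, define for every subspace $Q$: $\llbracket\mathbf{skip}\rrbracket^\#(Q)=Q$; $\llbracket\bar q:=|0\rangle\rrbracket^\#(Q)=\{|0\rangle_{\bar q}\otimes|\psi\rangle:|\psi\rangle\in\lceil\mathrm{Tr}_{\bar q}(Q)\rceil\}$; $\llbracket\bar q\mathrel{*{=}}U\rrbracket^\#(Q)=\{U|\psi\rangle:|\psi\rangle\in Q\}$; $\llbracket\mathbf{assert}\ P[\bar q]\rrbracket^\#(Q)=\mathrm{span}\{P|\psi\rangle:|\psi\rangle\in Q\}$. Each of these is a complete abstraction of the corresponding $\llbracket e\rrbracket$. Moreover, for any program $S$, if $\llbracket S\rrbracket(\rho)=\sum_{k\in K}E_k\rho E_k^\dagger$ is a Kraus representation, then the operator $Q\mapsto\mathrm{span}\{E_k|\psi\rangle:k\in K,|\psi\rangle\in Q\}$ is a complete abstraction of $\llbracket S\rrbracket$, i.e. $\alpha_s(\llbracket S\rrbracket(R))=\mathrm{span}\{E_k|\psi\rangle:k\in K,|\psi\rangle\in\alpha_s(R)\}$ for all $R\subseteq\mathcal D(\mathcal H_V)$.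
   Context: Fix a finite set $V$ of quantum variables, each a qubit with state space $\mathcal H_q\cong\mathbb C^2$; for $W\subseteq V$, $\mathcal H_W=\bigotimes_{q\in W}\mathcal H_q$. Operators and subspaces on $\mathcal H_W$ are identified with their cylindrical extensions to $\mathcal H_V$, and a subspace is identified with its orthogonal projector (so $\mathrm{Tr}_{\bar q}(Q)$ is the partial trace over $\bar q$ of the projector onto $Q$); $P^\perp$ is the orthocomplement; $\lceil\rho\rceil$ is the support of $\rho$. $\mathcal D(\mathcal H_V)$ is the set of partial density operators (positive, trace $\le1$). Programs: $S::=\mathbf{skip}\mid \bar q:=|0\rangle\mid \bar q\mathrel{*{=}}U\mid \mathbf{assert}\ P[\bar q]\mid S_0;S_1\mid \mathbf{if}\ P[\bar q]\ \mathbf{then}\ S_1\ \mathbf{else}\ S_0\ \mathbf{end}\mid\mathbf{while}\ P[\bar q]\ \mathbf{do}\ S\ \mathbf{end}$, with $\bar q=q_1,\dots,q_t$ distinct variables, $U$ unitary on $\mathcal H_{\bar q}$, $P$ a subspace of $\mathcal H_{\bar q}$; the first four forms are the basic commands. Semantics: $\llbracket\mathbf{skip}\rrbracket(\rho)=\rho$; $\llbracket\bar q:=|0\rangle\rrbracket(\rho)=\sum_{i=0}^{2^t-1}|0\rangle_{\bar q}\langle i|\rho|i\rangle_{\bar q}\langle0|$; $\llbracket\bar q\mathrel{*{=}}U\rrbracket(\rho)=U\rho U^\dagger$; $\llbracket\mathbf{assert}\ P[\bar q]\rrbracket(\rho)=P\rho P$; $\llbracket S_0;S_1\rrbracket=\llbracket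 S_1\rrbracket\circ\llbracket S_0\rrbracket$; $\llbracket\mathbf{if}\ P[\bar q]\ \mathbf{then}\ S_1\ \mathbf{else}\ S_0\ \mathbf{end}\rrbracket(\rho)=\llbracket\mathbf{assert}\ P[\bar q];S_1\rrbracket(\rho)+\llbracket\mathbf{assert}\ P^\perp[\bar q];S_0\rrbracket(\rho)$; $\llbracket\mathbf{while}\ P[\bar q]\ \mathbf{do}\ S\ \mathbf{end}\rrbracket(\rho)=\sum_{i\ge0}\llbracket(\mathbf{assert}\ P[\bar q];S)^i;\mathbf{assert}\ P^\perp[\bar q]\rrbracket(\rho)$. Each $\llbracket S\rrbracket$ is a completely positive trace-nonincreasing map and so admits a finite Kraus representation. $\llbracket S\rrbracket(R)=\{\llbracket S\rrbracket(\rho):\rho\in R\}$ for $R\subseteq\mathcal D(\mathcal H_V)$. The subspace domain $\mathcal S(\mathcal H_V)$: all subspaces of $\mathcal H_V$, ordered by inclusion, join $P\vee Q=\mathrm{span}(P\cup Q)$; $\gamma_s(P)=\{\rho:\lceil\rho\rceil\subseteq P\}$, $\alpha_s(R)=\bigvee\{\lceil\rho\rceil:\rho\in R\}$. An operator $f^\#$ on $\mathcal S(\mathcal H_V)$ is a complete abstraction of $f$ if $\alpha_s\circ f=f^\#\circ\alpha_s$. *)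

theory Defs
  imports Complex_Main
begin

text \<open>Quantum variables form a finite type 'v (the set V). A computational basis state of
  H_V is an assignment 'v \<Rightarrow> bool; state vectors of H_V are functions from basis states to
  complex numbers; operators on H_V are matrices indexed by basis states.\<close>

type_synonym 'v bas = "'v \<Rightarrow> bool"
type_synonym 'v state = "'v bas \<Rightarrow> complex"
type_synonym 'v op = "'v bas \<Rightarrow> 'v bas \<Rightarrow> complex"

definition mv :: "'v::finite op \<Rightarrow> 'v state \<Rightarrow> 'v state" where
  "mv A \<psi> = (\<lambda>i. \<Sum>j\<in>UNIV. A i j * \<psi> j)"

definition mmul :: "'v::finite op \<Rightarrow> 'v op \<Rightarrow> 'v op" where
  "mmul A B = (\<lambda>i j. \<Sum>k\<in>UNIV. A i k * B k j)"

definition adj :: "'v op \<Rightarrow> 'v op" where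
  "adj A = (\<lambda>i j. cnj (A j i))"

definition idop :: "'v op" where
  "idop = (\<lambda>i j. if i = j then 1 else 0)"

definition unitary_op :: "'v::finite op \<Rightarrow> bool" where
  "unitary_op U \<longleftrightarrow> mmul (adj U) U = idop \<and> mmul U (adj U) = idop"

definition cinner :: "'v::finite state \<Rightarrow> 'v state \<Rightarrow> complex" where
  "cinner \<phi> \<psi> = (\<Sum>b\<in>UNIV. cnj (\<phi> b) * \<psi> b)"

definition trace_op :: "'v::finite op \<Rightarrow> complex" where
  "trace_op A = (\<Sum>i\<in>UNIV. A i i)"

definition positive_op :: "'v::finite op \<Rightarrow> bool" where
  "positive_op A \<longleftrightarrow> (\<forall>\<psi>. cinner \<psi> (mv A \<psi>) \<in> \<real> \<and> 0 \<le> Re (cinner \<psi> (mv A \<psi>)))"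

definition dens :: "'v::finite op set" where
  "dens = {\<rho>. positive_op \<rho> \<and> Re (trace_op \<rho>) \<le> 1}"

definition cspan :: "'v state set \<Rightarrow> 'v state set" where
  "cspan S = {v. \<exists>F c. finite F \<and> F \<subseteq> S \<and> v = (\<lambda>b. \<Sum>x\<in>F. c x * x b)}"

definition is_subspace :: "'v state set \<Rightarrow> bool" where
  "is_subspace Q \<longleftrightarrow> cspan Q = Q"

definition proj :: "'v::finite state set \<Rightarrow> 'v op" where
  "proj Q = (THE P. adj P = P \<and> mmul P P = P \<and> range (mv P) = Q)"

definition supp :: "'v::finite op \<Rightarrow> 'v state set" where
  "supp \<rho> = range (mv \<rho>)"

text \<open>Local structure: basis states of H_W are assignments that are False outside W.\<close>
definition rst :: "'v set \<Rightarrow> 'v bas \<Rightarrow> 'v bas" where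
  "rst W b = (\<lambda>v. v \<in> W \<and> b v)"

definition BW :: "'v set \<Rightarrow> 'v bas set" where
  "BW W = {b. \<forall>v. v \<notin> W \<longrightarrow> \<not> b v}"

definition merge :: "'v set \<Rightarrow> 'v bas \<Rightarrow> 'v bas \<Rightarrow> 'v bas" where
  "merge W k i = (\<lambda>v. if v \<in> W then k v else i v)"

text \<open>Vectors of H_W (embedded as vectors supported on the local basis) and subspaces of H_W.\<close>
definition local_vecs :: "'v set \<Rightarrow> 'v state set" where
  "local_vecs W = {\<psi>. \<forall>b. b \<notin> BW W \<longrightarrow> \<psi> b = 0}"

definition local_subspace :: "'v set \<Rightarrow> 'v state set \<Rightarrow> bool" where
  "local_subspace W P \<longleftrightarrow> is_subspace P \<and> P \<subseteq> local_vecs W"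

definition local_perp :: "'v::finite set \<Rightarrow> 'v state set \<Rightarrow> 'v state set" where
  "local_perp W P = {\<psi> \<in> local_vecs W. \<forall>\<phi>\<in>P. cinner \<phi> \<psi> = 0}"

text \<open>Cylindrical extension of an operator on H_W (matrix indexed by local basis states) to H_V.\<close>
definition cyl :: "'v set \<Rightarrow> 'v op \<Rightarrow> 'v op" where
  "cyl W A = (\<lambda>i j. if (\<forall>v. v \<notin> W \<longrightarrow> i v = j v) then A (rst W i) (rst W j) else 0)"

text \<open>Partial trace over W; the result is an operator on H_(V-W).\<close>
definition ptrace :: "'v set \<Rightarrow> 'v op \<Rightarrow> 'v op" where
  "ptrace W A = (\<lambda>i j. if i \<in> BW (- W) \<and> j \<in> BW (- W)
      then (\<Sum>k\<in>BW W. A (merge W k i) (merge W k j)) else 0)"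

text \<open>|0>_W tensor psi, for psi a vector of H_(V-W).\<close>
definition tens0 :: "'v set \<Rightarrow> 'v state \<Rightarrow> 'v state" where
  "tens0 W \<psi> = (\<lambda>b. if (\<forall>v\<in>W. \<not> b v) then \<psi> (rst (- W) b) else 0)"

definition ket0bra :: "'v bas \<Rightarrow> 'v op" where
  "ket0bra i = (\<lambda>a b. if a = (\<lambda>_. False) \<and> b = i then 1 else 0)"

definition sandwich :: "'v::finite op \<Rightarrow> 'v op \<Rightarrow> 'v op" where
  "sandwich E \<rho> = mmul (mmul E \<rho>) (adj E)"

text \<open>Programs. Variable lists qbar are represented by the set of their (distinct) variables.\<close>
datatype 'v prog =
    Skip
  | Init "'v set"
  | Apply "'v set" "'v op"
  | Assert "'v set" "'v state set"
  | Seq "'v prog" "'v prog"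
  | IfP "'v set" "'v state set" "'v prog" "'v prog"
  | WhileP "'v set" "'v state set" "'v prog"

fun wf_prog :: "'v::finite prog \<Rightarrow> bool" where
  "wf_prog Skip = True"
| "wf_prog (Init W) = True"
| "wf_prog (Apply W U) = unitary_op (cyl W U)"
| "wf_prog (Assert W P) = local_subspace W P"
| "wf_prog (Seq S0 S1) = (wf_prog S0 \<and> wf_prog S1)"
| "wf_prog (IfP W P S1 S0) = (local_subspace W P \<and> wf_prog S1 \<and> wf_prog S0)"
| "wf_prog (WhileP W P S) = (local_subspace W P \<and> wf_prog S)"

primrec sem :: "'v::finite prog \<Rightarrow> 'v op \<Rightarrow> 'v op" where
  "sem Skip \<rho> = \<rho>"
| "sem (Init W) \<rho> = (\<lambda>a b. \<Sum>i\<in>BW W. sandwich (cyl W (ket0bra i)) \<rho> a b)"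
| "sem (Apply W U) \<rho> = sandwich (cyl W U) \<rho>"
| "sem (Assert W P) \<rho> = sandwich (cyl W (proj P)) \<rho>"
| "sem (Seq S0 S1) \<rho> = sem S1 (sem S0 \<rho>)"
| "sem (IfP W P S1 S0) \<rho> = (\<lambda>a b.
      sem S1 (sandwich (cyl W (proj P)) \<rho>) a b
    + sem S0 (sandwich (cyl W (proj (local_perp W P))) \<rho>) a b)"
| "sem (WhileP W P S) \<rho> = (\<lambda>a b. \<Sum>n. sandwich (cyl W (proj (local_perp W P)))
      (((\<lambda>\<sigma>. sem S (sandwich (cyl W (proj P)) \<sigma>)) ^^ n) \<rho>) a b)"

definition alpha_s :: "'v::finite op set \<Rightarrow> 'v state set" where
  "alpha_s R = cspan (\<Union>\<rho>\<in>R. supp \<rho>)"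

definition gamma_s :: "'v::finite state set \<Rightarrow> 'v op set" where
  "gamma_s P = {\<rho> \<in> dens. supp \<rho> \<subseteq> P}"

definition complete_abs :: "('v::finite op \<Rightarrow> 'v op) \<Rightarrow> ('v state set \<Rightarrow> 'v state set) \<Rightarrow> bool" where
  "complete_abs f fs \<longleftrightarrow> (\<forall>R. R \<subseteq> dens \<longrightarrow> alpha_s (f ` R) = fs (alpha_s R))"

end

theory Submission
  imports Defs "HOL-Analysis.Linear_Algebra" "HOL-Analysis.Finite_Cartesian_Product"
begin

definition subsp :: "'v state set \<Rightarrow> bool" where
  "subsp T \<longleftrightarrow> (\<lambda>_. 0) \<in> T \<and> (\<forall>x\<in>T. \<forall>y\<in>T. (\<lambda>b. x b + y b) \<in> T)
     \<and> (\<forall>c. \<forall>x\<in>T. (\<lambda>b. c * x b) \<in> T)"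

lemma subspD:
  assumes "subsp T"
  shows "(\<lambda>_. 0) \<in> T" "x \<in> T \<Longrightarrow> y \<in> T \<Longrightarrow> (\<lambda>b. x b + y b) \<in> T"
    "x \<in> T \<Longrightarrow> (\<lambda>b. c * x b) \<in> T"
  using assms unfolding subsp_def by auto

lemma subsp_sum:
  assumes "subsp T" "finite F" "\<And>k. k \<in> F \<Longrightarrow> f k \<in> T"
  shows "(\<lambda>b. \<Sum>k\<in>F. f k b) \<in> T"
  using assms(2,3)
proof (induction F rule: finite_induct)
  case empty then show ?case using subspD(1)[OF assms(1)] by simp
next
  case (insert x F)
  then show ?case using subspD(2)[OF assms(1), of "f x" "\<lambda>b. \<Sum>k\<in>F. f k b"] by simp
qed

lemma subsp_lincomb:
  assumes "subsp T" "finite F" "F \<subseteq> T"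
  shows "(\<lambda>b. \<Sum>x\<in>F. c x * x b) \<in> T"
proof (rule subsp_sum[OF assms(1,2), of "\<lambda>x b. c x * x b"])
  fix k assume "k \<in> F"
  then show "(\<lambda>b. c k * k b) \<in> T" using subspD(3)[OF assms(1)] assms(3) by blast
qed

lemma cspan_least: assumes "subsp T" "S \<subseteq> T" shows "cspan S \<subseteq> T"
proof
  fix v assume "v \<in> cspan S"
  then obtain F c where F: "finite F" "F \<subseteq> S" "v = (\<lambda>b. \<Sum>x\<in>F. c x * x b)"
    unfolding cspan_def by blast
  then show "v \<in> T" using subsp_lincomb[OF assms(1) F(1)] assms(2) by simp
qed

lemma cspan_sup: "S \<subseteq> cspan S"
proof
  fix x assume "x \<in> S"
  then show "x \<in> cspan S" unfolding cspan_def
    by (intro CollectI exI[of _ "{x}"] exI[of _ "\<lambda>_. 1"]) auto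
qed

lemma subsp_cspan: "subsp (cspan S)"
  unfolding subsp_def
proof (intro conjI ballI allI)
  show "(\<lambda>_. 0) \<in> cspan S" unfolding cspan_def
    by (intro CollectI exI[of _ "{}"]) auto
next
  fix x y assume "x \<in> cspan S" "y \<in> cspan S"
  then obtain F1 c1 F2 c2 where F: "finite F1" "F1 \<subseteq> S" "x = (\<lambda>b. \<Sum>z\<in>F1. c1 z * z b)"
    "finite F2" "F2 \<subseteq> S" "y = (\<lambda>b. \<Sum>z\<in>F2. c2 z * z b)" unfolding cspan_def by blast
  define c where "c z = (if z \<in> F1 then c1 z else 0) + (if z \<in> F2 then c2 z else 0)" for z
  have "(\<lambda>b. x b + y b) = (\<lambda>b. \<Sum>z\<in>F1 \<union> F2. c z * z b)"
  proof
    fix b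
    have e1: "(\<Sum>z\<in>F1 \<union> F2. (if z \<in> F1 then c1 z * z b else 0)) = (\<Sum>z\<in>F1. c1 z * z b)"
      using sum.inter_restrict[of "F1 \<union> F2" "\<lambda>z. c1 z * z b" F1] F
      by (simp add: Un_Int_eq(1))
    have e2: "(\<Sum>z\<in>F1 \<union> F2. (if z \<in> F2 then c2 z * z b else 0)) = (\<Sum>z\<in>F2. c2 z * z b)"
      using sum.inter_restrict[of "F1 \<union> F2" "\<lambda>z. c2 z * z b" F2] F
      by (simp add: Un_Int_eq(2))
    have "(\<Sum>z\<in>F1 \<union> F2. c z * z b) = (\<Sum>z\<in>F1 \<union> F2. (if z \<in> F1 then c1 z * z b else 0) + (if z \<in> F2 then c2 z * z b else 0))"
      by (rule sum.cong) (auto simp: c_def distrib_right)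
    also have "\<dots> = (\<Sum>z\<in>F1. c1 z * z b) + (\<Sum>z\<in>F2. c2 z * z b)"
      using e1 e2 by (simp add: sum.distrib)
    finally show "x b + y b = (\<Sum>z\<in>F1 \<union> F2. c z * z b)"
      unfolding F(3,6) by simp
  qed
  then show "(\<lambda>b. x b + y b) \<in> cspan S" unfolding cspan_def
    by (intro CollectI exI[of _ "F1 \<union> F2"] exI[of _ c]) (use F in simp)
next
  fix a x assume "x \<in> cspan S"
  then obtain F c where F: "finite F" "F \<subseteq> S" "x = (\<lambda>b. \<Sum>z\<in>F. c z * z b)"
    unfolding cspan_def by blast
  have "(\<lambda>b. a * x b) = (\<lambda>b. \<Sum>z\<in>F. (a * c z) * z b)"
    unfolding F(3) by (simp add: sum_distrib_left mult.assoc)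
  then show "(\<lambda>b. a * x b) \<in> cspan S" unfolding cspan_def
    by (intro CollectI exI[of _ F] exI[of _ "\<lambda>z. a * c z"]) (use F in simp)
qed

lemma cspan_mono: "A \<subseteq> B \<Longrightarrow> cspan A \<subseteq> cspan B"
  using cspan_least[OF subsp_cspan, of A B] cspan_sup[of B] by simp

lemma cspan_subsp: "subsp T \<Longrightarrow> cspan T = T"
  using cspan_least cspan_sup by blast

lemma is_subspace_subsp: "is_subspace Q \<longleftrightarrow> subsp Q"
  unfolding is_subspace_def using cspan_subsp[of Q] subsp_cspan[of Q] by auto

definition lin :: "('v state \<Rightarrow> 'w state) \<Rightarrow> bool" where
  "lin f \<longleftrightarrow> (\<forall>x y. f (\<lambda>b. x b + y b) = (\<lambda>b. f x b + f y b)) \<and> (\<forall>c x. f (\<lambda>b. c * x b) = (\<lambda>b. c * f x b))"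

lemma lin_zero: assumes "lin f" shows "f (\<lambda>_. 0) = (\<lambda>_. 0)"
proof -
  have h: "\<forall>c x. f (\<lambda>b. c * x b) = (\<lambda>b. c * f x b)" using assms unfolding lin_def by blast
  show ?thesis using h[rule_format, of 0 "\<lambda>_. 0"] by simp
qed

lemma subsp_image: assumes "lin f" "subsp T" shows "subsp (f ` T)"
  unfolding subsp_def
proof (intro conjI ballI allI)
  show "(\<lambda>_. 0) \<in> f ` T" using lin_zero[OF assms(1)] subspD(1)[OF assms(2)] by (metis (no_types) image_eqI)
next
  fix x y assume "x \<in> f ` T" "y \<in> f ` T"
  then obtain u v where "u \<in> T" "v \<in> T" "x = f u" "y = f v" by blast
  moreover have "(\<lambda>b. x b + y b) = f (\<lambda>b. u b + v b)" using assms(1) \<open>x = f u\<close> \<open>y = f v\<close> unfolding lin_def by simp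
  moreover have "(\<lambda>b. u b + v b) \<in> T" using subspD(2)[OF assms(2)] \<open>u \<in> T\<close> \<open>v \<in> T\<close> .
  ultimately show "(\<lambda>b. x b + y b) \<in> f ` T" by (simp only: image_eqI)
next
  fix c x assume "x \<in> f ` T"
  then obtain u where "u \<in> T" "x = f u" by blast
  moreover have "(\<lambda>b. c * x b) = f (\<lambda>b. c * u b)" using assms(1) \<open>x = f u\<close> unfolding lin_def by simp
  moreover have "(\<lambda>b. c * u b) \<in> T" using subspD(3)[OF assms(2)] \<open>u \<in> T\<close> .
  ultimately show "(\<lambda>b. c * x b) \<in> f ` T" by (simp only: image_eqI)
qed

lemma subsp_preimage: assumes "lin f" "subsp T" shows "subsp {x. f x \<in> T}"
  unfolding subsp_def
proof (intro conjI ballI allI)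
  show "(\<lambda>_. 0) \<in> {x. f x \<in> T}" using lin_zero[OF assms(1)] subspD(1)[OF assms(2)] by simp
next
  fix x y assume "x \<in> {x. f x \<in> T}" "y \<in> {x. f x \<in> T}"
  then show "(\<lambda>b. x b + y b) \<in> {x. f x \<in> T}"
    using assms subspD(2)[OF assms(2)] unfolding lin_def by simp
next
  fix c x assume "x \<in> {x. f x \<in> T}"
  then show "(\<lambda>b. c * x b) \<in> {x. f x \<in> T}"
    using assms subspD(3)[OF assms(2)] unfolding lin_def by simp
qed

lemma cspan_image: "lin f \<Longrightarrow> f ` cspan X = cspan (f ` X)"
proof
  assume l: "lin f"
  have "cspan X \<subseteq> {x. f x \<in> cspan (f ` X)}"
    by (rule cspan_least[OF subsp_preimage[OF l subsp_cspan]]) (use cspan_sup in blast)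
  then show "f ` cspan X \<subseteq> cspan (f ` X)" by blast
  show "cspan (f ` X) \<subseteq> f ` cspan X"
    by (rule cspan_least[OF subsp_image[OF l subsp_cspan]]) (use cspan_sup in blast)
qed

lemma lin_mv: "lin (mv A)"
  unfolding lin_def mv_def by (simp add: distrib_left sum.distrib sum_distrib_left mult.left_commute)

lemma lin_tens0: "lin (tens0 W)"
  unfolding lin_def tens0_def by auto

definition dlt :: "'v bas \<Rightarrow> 'v state" where "dlt j = (\<lambda>i. if i = j then 1 else 0)"

lemma mv_dlt: "mv A (dlt j) = (\<lambda>i. A i j)"
  unfolding mv_def dlt_def by (simp add: if_distrib cong: if_cong)

lemma op_eq: assumes "\<And>x. mv A x = mv B x" shows "A = B"
proof (intro ext)
  fix i j
  have "(\<lambda>i. A i j) = (\<lambda>i. B i j)" using assms[of "dlt j"] unfolding mv_dlt .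
  then show "A i j = B i j" by (rule fun_cong)
qed

lemma mv_mmul: "mv (mmul A B) x = mv A (mv B x)"
  unfolding mv_def mmul_def
  by (rule ext, simp add: sum_distrib_left sum_distrib_right mult.assoc, subst sum.swap, simp)

lemma adj_adj[simp]: "adj (adj A) = A"
  unfolding adj_def by simp

lemma cinner_adj: "cinner (mv A x) y = cinner x (mv (adj A) y)"
  unfolding cinner_def mv_def adj_def
  by (simp add: sum_distrib_left sum_distrib_right mult_ac, subst sum.swap, simp add: mult_ac)

lemma cinner_adj2: "cinner x (mv A y) = cinner (mv (adj A) x) y"
  using cinner_adj[of "adj A" x y] by simp

lemma cinner_sym: "cinner y x = cnj (cinner x y)"
  unfolding cinner_def by (simp add: mult.commute)

lemma cinner_dlt: "cinner (dlt i) v = v i"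
  unfolding cinner_def dlt_def by (subst sum.cong[OF refl, of _ _ "\<lambda>b. if b = i then v b else 0"]) auto

lemma cinner_add_right: "cinner x (\<lambda>b. y b + z b) = cinner x y + cinner x z"
  unfolding cinner_def by (simp only: distrib_left sum.distrib)
lemma cinner_diff_right: "cinner x (\<lambda>b. y b - z b) = cinner x y - cinner x z"
  unfolding cinner_def by (simp only: right_diff_distrib sum_subtractf)
lemma cinner_scale_right: "cinner x (\<lambda>b. c * y b) = c * cinner x y"
  unfolding cinner_def by (simp add: sum_distrib_left mult.left_commute)
lemma cinner_add_left: "cinner (\<lambda>b. x b + y b) z = cinner x z + cinner y z"
  unfolding cinner_def by (simp only: complex_cnj_add distrib_right sum.distrib)
lemma cinner_diff_left: "cinner (\<lambda>b. x b - y b) z = cinner x z - cinner y z"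
  unfolding cinner_def by (simp only: complex_cnj_diff left_diff_distrib sum_subtractf)
lemma cinner_scale_left: "cinner (\<lambda>b. c * x b) z = cnj c * cinner x z"
  unfolding cinner_def by (simp add: sum_distrib_left mult.assoc)
lemma cinner_zero_left[simp]: "cinner (\<lambda>_. 0) z = 0"
  unfolding cinner_def by simp
lemma cinner_zero_right[simp]: "cinner z (\<lambda>_. 0) = 0"
  unfolding cinner_def by simp
lemma cinner_sum_right: "cinner w (\<lambda>b. \<Sum>j\<in>J. f j b) = (\<Sum>j\<in>J. cinner w (f j))"
  unfolding cinner_def by (simp only: sum_distrib_left, subst sum.swap, rule refl)

lemma cinner_self: "cinner x x = of_real (\<Sum>b\<in>UNIV. (cmod (x b))\<^sup>2)"
  unfolding cinner_def of_real_sum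
proof (rule sum.cong[OF refl])
  fix b
  show "cnj (x b) * x b = complex_of_real ((cmod (x b))\<^sup>2)"
    using complex_norm_square[of "x b"] by (simp add: mult.commute)
qed

lemma cinner_self_Re: "0 \<le> Re (cinner x x)" "Im (cinner x x) = 0"
  unfolding cinner_self by (auto intro: sum_nonneg)

lemma cinner_self_eq0: assumes "cinner x x = 0" shows "x = (\<lambda>_. 0)"
proof
  fix b
  have "(\<Sum>b\<in>UNIV. (cmod (x b))\<^sup>2) = 0" using assms unfolding cinner_self by (simp only: of_real_eq_0_iff)
  then have "(cmod (x b))\<^sup>2 = 0" by (subst (asm) sum_nonneg_eq_0_iff) auto
  then show "x b = 0" by simp
qed

lemma vec_eq_by_inner: assumes "\<And>x. cinner x u = cinner x v" shows "u = v"
proof -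
  let ?d = "\<lambda>b. u b - v b"
  have "cinner ?d ?d = 0" using assms[of ?d] by (simp add: cinner_diff_right)
  then have "?d = (\<lambda>_. 0)" by (rule cinner_self_eq0)
  then show ?thesis by (simp add: fun_eq_iff)
qed

lemma mv_add: "mv A (\<lambda>b. x b + y b) = (\<lambda>b. mv A x b + mv A y b)"
  unfolding mv_def by (simp only: distrib_left sum.distrib)
lemma mv_scale: "mv A (\<lambda>b. c * x b) = (\<lambda>b. c * mv A x b)"
  unfolding mv_def by (simp add: sum_distrib_left mult_ac)
lemma mv_diff: "mv A (\<lambda>b. x b - y b) = (\<lambda>b. mv A x b - mv A y b)"
  unfolding mv_def by (simp add: right_diff_distrib sum_subtractf)
lemma mv_zero: "mv A (\<lambda>_. 0) = (\<lambda>_. 0)"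
  unfolding mv_def by simp

lemma mv_opsum: "mv (\<lambda>a b. \<Sum>k\<in>K. F k a b) x = (\<lambda>i. \<Sum>k\<in>K. mv (F k) x i)"
  unfolding mv_def by (rule ext, simp only: sum_distrib_right, subst sum.swap, rule refl)

lemma mv_sandwich: "mv (sandwich E \<rho>) x = mv E (mv \<rho> (mv (adj E) x))"
  unfolding sandwich_def by (simp add: mv_mmul)

lemma q_expand:
  "cinner (\<lambda>b. x b + s * y b) (mv A (\<lambda>b. x b + s * y b)) =
    cinner x (mv A x) + s * cinner x (mv A y) + cnj s * cinner y (mv A x) + cnj s * s * cinner y (mv A y)"
  unfolding mv_add mv_scale cinner_add_left cinner_add_right cinner_scale_left cinner_scale_right
  by (simp only: distrib_left mult.assoc add.assoc)

lemma pos_herm: assumes "positive_op A" shows "adj A = A"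
proof -
  have real: "\<And>v. Im (cinner v (mv A v)) = 0" using assms unfolding positive_op_def
    by (simp add: complex_is_Real_iff)
  have key: "cinner y (mv A x) = cnj (cinner x (mv A y))" for x y
  proof -
    define a where "a = cinner x (mv A y)"
    define b where "b = cinner y (mv A x)"
    have h1: "Im (cinner x (mv A x) + 1 * a + cnj 1 * b + cnj 1 * 1 * cinner y (mv A y)) = 0"
      using real[of "\<lambda>b. x b + 1 * y b"] unfolding q_expand a_def b_def .
    have h2: "Im (cinner x (mv A x) + \<i> * a + cnj \<i> * b + cnj \<i> * \<i> * cinner y (mv A y)) = 0"
      using real[of "\<lambda>b. x b + \<i> * y b"] unfolding q_expand a_def b_def .
    have e1: "Im a + Im b = 0" using h1 real[of x] real[of y] by simp
    have e2: "Re a - Re b = 0" using h2 real[of x] real[of y] by simp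
    show ?thesis unfolding a_def[symmetric] b_def[symmetric] using e1 e2 by (simp add: complex_eq_iff)
  qed
  show ?thesis
  proof (intro ext)
    fix i j
    have "cinner (dlt i) (mv A (dlt j)) = cnj (cinner (dlt j) (mv A (dlt i)))" by (rule key)
    then have "A i j = cnj (A j i)" unfolding cinner_dlt mv_dlt .
    then show "adj A i j = A i j" unfolding adj_def by simp
  qed
qed

lemma pos_null: assumes "positive_op A" "cinner v (mv A v) = 0" shows "mv A v = (\<lambda>_. 0)"
proof -
  have h: "adj A = A" using assms(1) by (rule pos_herm)
  define w where "w = mv A v"
  define N where "N = Re (cinner w w)"
  define m where "m = Re (cinner w (mv A w))"
  have N0: "0 \<le> N" unfolding N_def by (rule cinner_self_Re)
  have m0: "0 \<le> m" using assms(1) unfolding positive_op_def m_def by blast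
  have c1: "cinner v (mv A w) = cinner w w" using cinner_adj2[of v A w] h unfolding w_def by simp
  have a0: "cinner v w = 0" using assms(2) unfolding w_def .
  have ineq: "0 \<le> 2*t*N + t^2 * m" for t :: real
  proof -
    have "0 \<le> Re (cinner (\<lambda>b. v b + of_real t * w b) (mv A (\<lambda>b. v b + of_real t * w b)))"
      using assms(1) unfolding positive_op_def by blast
    also have "\<dots> = 2*t*N + t^2*m"
      unfolding q_expand c1 a0 N_def m_def w_def[symmetric] by (simp add: power2_eq_square)
    finally show ?thesis .
  qed
  have "N = 0"
  proof (rule ccontr)
    assume "N \<noteq> 0"
    then have Np: "N > 0" using N0 by simp
    define t where "t = - N / (m + 1)"
    have mp: "m + 1 > 0" using m0 by simp
    have X: "0 \<le> 2*t*N + t^2*m" by (rule ineq)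
    have ts: "t * (m+1) = -N" unfolding t_def using mp by simp
    have "(m+1)^2 * (2*t*N + t^2*m) = 2*N*(t*(m+1))*(m+1) + (t*(m+1))^2 * m"
      by (simp add: power2_eq_square algebra_simps)
    also have "\<dots> = -(N^2*(m+2))" unfolding ts by (simp add: power2_eq_square algebra_simps)
    finally have eq: "(m+1)^2 * (2*t*N + t^2*m) = -(N^2*(m+2))" .
    have "0 \<le> (m+1)^2 * (2*t*N + t^2*m)" using X by simp
    moreover have "N^2 * (m+2) > 0" using Np m0 by simp
    ultimately show False unfolding eq by simp
  qed
  then have "cinner w w = 0" using cinner_self_Re(2)[of w] unfolding N_def by (simp add: complex_eq_iff)
  then show ?thesis unfolding w_def by (rule cinner_self_eq0)
qed

definition emb :: "'v::finite state \<Rightarrow> complex ^ ('v bas)" where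
  "emb x = (\<chi> b. x b)"

lemma inner_emb: "inner (emb x) (emb y) = Re (cinner x y)"
  unfolding emb_def inner_vec_def cinner_def inner_complex_def by simp

lemma emb_add: "emb (\<lambda>b. x b + y b) = emb x + emb y"
  unfolding emb_def by (simp add: vec_eq_iff)
lemma emb_diff: "emb (\<lambda>b. x b - y b) = emb x - emb y"
  unfolding emb_def by (simp add: vec_eq_iff)
lemma emb_scale: "c *\<^sub>R emb x = emb (\<lambda>b. of_real c * x b)"
  unfolding vec_eq_iff
proof
  fix i
  show "(c *\<^sub>R emb x) $ i = emb (\<lambda>b. of_real c * x b) $ i"
    unfolding vector_scaleR_component emb_def vec_lambda_beta by (simp add: scaleR_conv_of_real)
qed
lemma emb_zero: "emb (\<lambda>_. 0) = 0"
  unfolding emb_def by (simp add: vec_eq_iff)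

lemma decomp: assumes "subsp S" shows "\<exists>y\<in>S. \<forall>w\<in>S. cinner w (\<lambda>b. x b - y b) = 0"
proof -
  have sub: "subspace (emb ` S)"
    unfolding subspace_def
  proof (intro conjI ballI allI)
    show "0 \<in> emb ` S" using subspD(1)[OF assms] emb_zero by (metis (no_types) image_eqI)
  next
    fix a b assume "a \<in> emb ` S" "b \<in> emb ` S"
    then obtain u v where uv: "u \<in> S" "v \<in> S" "a = emb u" "b = emb v" by blast
    have "(\<lambda>b. u b + v b) \<in> S" using subspD(2)[OF assms uv(1,2)] .
    then show "a + b \<in> emb ` S" unfolding uv(3,4) emb_add[symmetric] by (rule imageI)
  next
    fix c a assume "a \<in> emb ` S"
    then obtain u where u: "u \<in> S" "a = emb u" by blast
    have "(\<lambda>b. of_real c * u b) \<in> S" using subspD(3)[OF assms u(1)] .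
    then show "c *\<^sub>R a \<in> emb ` S" unfolding u(2) emb_scale by (rule imageI)
  qed
  then have sp: "span (emb ` S) = emb ` S" by simp
  show ?thesis
  proof (rule orthogonal_subspace_decomp_exists[of "emb ` S" "emb x"])
    fix y z assume y: "y \<in> span (emb ` S)" and z: "\<And>w. w \<in> span (emb ` S) \<Longrightarrow> orthogonal z w"
      and xyz: "emb x = y + z"
    from y sp obtain y0 where y0: "y0 \<in> S" "y = emb y0" by auto
    define z0 where "z0 = (\<lambda>b. x b - y0 b)"
    have ez: "emb z0 = z" unfolding z0_def emb_diff xyz y0(2) by simp
    have "cinner w z0 = 0" if "w \<in> S" for w
    proof -
      have o1: "orthogonal z (emb w)" using z sp that by auto
      have iw: "(\<lambda>b. \<i> * w b) \<in> S" using subspD(3)[OF assms that] .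
      have o2: "orthogonal z (emb (\<lambda>b. \<i> * w b))" using z sp iw by auto
      have "Re (cinner z0 w) = 0"
        using o1 unfolding orthogonal_def ez[symmetric] inner_emb .
      then have r1: "Re (cinner w z0) = 0" using cinner_sym[of w z0] by simp
      have "Re (cinner z0 (\<lambda>b. \<i> * w b)) = 0"
        using o2 unfolding orthogonal_def ez[symmetric] inner_emb .
      then have r2: "Re (cinner (\<lambda>b. \<i> * w b) z0) = 0" using cinner_sym[of "\<lambda>b. \<i> * w b" z0] by simp
      then have "Im (cinner w z0) = 0" unfolding cinner_scale_left by simp
      with r1 show ?thesis by (simp add: complex_eq_iff)
    qed
    then show ?thesis using y0(1) unfolding z0_def by blast
  qed
qed

definition py :: "'v::finite state set \<Rightarrow> 'v state \<Rightarrow> 'v state" where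
  "py S x = (SOME y. y \<in> S \<and> (\<forall>w\<in>S. cinner w (\<lambda>b. x b - y b) = 0))"

lemma py_prop: assumes "subsp S"
  shows "py S x \<in> S" "\<forall>w\<in>S. cinner w (\<lambda>b. x b - py S x b) = 0"
proof -
  have ex: "\<exists>y. y \<in> S \<and> (\<forall>w\<in>S. cinner w (\<lambda>b. x b - y b) = 0)"
    using decomp[OF assms, of x] unfolding Bex_def .
  have "py S x \<in> S \<and> (\<forall>w\<in>S. cinner w (\<lambda>b. x b - py S x b) = 0)"
    unfolding py_def by (rule someI_ex[OF ex])
  then show "py S x \<in> S" "\<forall>w\<in>S. cinner w (\<lambda>b. x b - py S x b) = 0" by auto
qed

lemma decomp_uniq:
  assumes "subsp S" "y1 \<in> S" "y2 \<in> S" "\<forall>w\<in>S. cinner w (\<lambda>b. x b - y1 b) = 0"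
    "\<forall>w\<in>S. cinner w (\<lambda>b. x b - y2 b) = 0"
  shows "y1 = y2"
proof -
  define d where "d = (\<lambda>b. y1 b - y2 b)"
  have "(\<lambda>b. y1 b + (-1) * y2 b) \<in> S"
    using subspD(2)[OF assms(1) assms(2) subspD(3)[OF assms(1) assms(3)]] .
  then have dS: "d \<in> S" unfolding d_def by simp
  have "d = (\<lambda>b. (x b - y2 b) - (x b - y1 b))" unfolding d_def by (simp add: fun_eq_iff)
  then have "cinner d d = cinner d (\<lambda>b. x b - y2 b) - cinner d (\<lambda>b. x b - y1 b)"
    using cinner_diff_right[of d "\<lambda>b. x b - y2 b" "\<lambda>b. x b - y1 b"] by simp
  also have "\<dots> = 0" using assms(4,5) dS by simp
  finally have "d = (\<lambda>_. 0)" by (rule cinner_self_eq0)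
  then show ?thesis unfolding d_def by (simp add: fun_eq_iff)
qed

lemma py_uniq: assumes "subsp S" "y \<in> S" "\<forall>w\<in>S. cinner w (\<lambda>b. x b - y b) = 0"
  shows "py S x = y"
  using decomp_uniq[OF assms(1) py_prop(1)[OF assms(1)] assms(2) py_prop(2)[OF assms(1)] assms(3)] .

definition Pm :: "'v::finite state set \<Rightarrow> 'v op" where
  "Pm S = (\<lambda>i j. py S (dlt j) i)"

lemma mv_Pm: assumes "subsp S" shows "mv (Pm S) x = py S x"
proof -
  have e: "mv (Pm S) x = (\<lambda>b. \<Sum>j\<in>UNIV. x j * py S (dlt j) b)"
    unfolding mv_def Pm_def by (simp add: mult.commute)
  have inS: "mv (Pm S) x \<in> S" unfolding e
    by (rule subsp_sum[OF assms]) (simp_all add: subspD(3)[OF assms py_prop(1)[OF assms]])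
  have orth: "\<forall>w\<in>S. cinner w (\<lambda>b. x b - mv (Pm S) x b) = 0"
  proof
    fix w assume w: "w \<in> S"
    have c1: "cinner w (py S (dlt j)) = cnj (w j)" for j
    proof -
      have "cinner w (\<lambda>b. dlt j b - py S (dlt j) b) = 0" using py_prop(2)[OF assms] w by blast
      then have "cinner w (dlt j) = cinner w (py S (dlt j))" unfolding cinner_diff_right by simp
      moreover have "cinner w (dlt j) = cnj (w j)" using cinner_sym[of w "dlt j"] cinner_dlt[of j w] by simp
      ultimately show ?thesis by simp
    qed
    have "cinner w (mv (Pm S) x) = (\<Sum>j\<in>UNIV. x j * cnj (w j))"
      unfolding e cinner_sum_right cinner_scale_right c1 by simp
    moreover have "cinner w x = (\<Sum>j\<in>UNIV. x j * cnj (w j))" unfolding cinner_def by (simp add: mult.commute)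
    ultimately show "cinner w (\<lambda>b. x b - mv (Pm S) x b) = 0" unfolding cinner_diff_right by simp
  qed
  show ?thesis using py_uniq[OF assms inS orth] by simp
qed

lemma proj_facts: assumes "subsp Q"
  shows "adj (proj Q) = proj Q" "mmul (proj Q) (proj Q) = proj Q" "range (mv (proj Q)) = Q"
proof -
  have pyQ: "py Q q = q" if "q \<in> Q" for q
    using py_uniq[OF assms that] by simp
  have rng: "range (mv (Pm Q)) = Q"
  proof
    show "range (mv (Pm Q)) \<subseteq> Q" using mv_Pm[OF assms] py_prop(1)[OF assms] by auto
    show "Q \<subseteq> range (mv (Pm Q))"
    proof
      fix q assume "q \<in> Q"
      then have "q = mv (Pm Q) q" using mv_Pm[OF assms] pyQ by simp
      then show "q \<in> range (mv (Pm Q))" by (rule range_eqI[of q "mv (Pm Q)" q])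
    qed
  qed
  have idem: "mmul (Pm Q) (Pm Q) = Pm Q"
    by (rule op_eq) (simp add: mv_mmul mv_Pm[OF assms] pyQ py_prop(1)[OF assms])
  have sa: "adj (Pm Q) = Pm Q"
  proof (rule op_eq)
    fix y
    show "mv (adj (Pm Q)) y = mv (Pm Q) y"
    proof (rule vec_eq_by_inner)
      fix x
      have "cinner x (mv (adj (Pm Q)) y) = cinner (py Q x) y"
        using cinner_adj[of "Pm Q" x y] mv_Pm[OF assms] by simp
      also have "\<dots> = cinner (py Q x) (py Q y)"
      proof -
        have "cinner (py Q x) (\<lambda>b. y b - py Q y b) = 0"
          using py_prop(2)[OF assms, of y] py_prop(1)[OF assms, of x] by blast
        then show ?thesis unfolding cinner_diff_right by simp
      qed
      also have "\<dots> = cinner x (py Q y)"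
      proof -
        have "cinner (py Q y) (\<lambda>b. x b - py Q x b) = 0"
          using py_prop(2)[OF assms, of x] py_prop(1)[OF assms, of y] by blast
        then have "cinner (\<lambda>b. x b - py Q x b) (py Q y) = 0"
          using cinner_sym[of "\<lambda>b. x b - py Q x b" "py Q y"] by simp
        then show ?thesis unfolding cinner_diff_left by simp
      qed
      finally show "cinner x (mv (adj (Pm Q)) y) = cinner x (mv (Pm Q) y)"
        using mv_Pm[OF assms] by simp
    qed
  qed
  have uniq: "P = Pm Q" if C: "adj P = P \<and> mmul P P = P \<and> range (mv P) = Q" for P
  proof (rule op_eq)
    fix x
    have inQ: "mv P x \<in> Q" using C by auto
    have orth: "\<forall>w\<in>Q. cinner w (\<lambda>b. x b - mv P x b) = 0"
    proof
      fix w assume "w \<in> Q"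
      then obtain u where u: "w = mv P u" using C by auto
      have z: "mv P (\<lambda>b. x b - mv P x b) = (\<lambda>_. 0)"
        unfolding mv_diff mv_mmul[symmetric] using C by simp
      have "cinner w (\<lambda>b. x b - mv P x b) = cinner u (mv P (\<lambda>b. x b - mv P x b))"
        unfolding u cinner_adj using C by simp
      then show "cinner w (\<lambda>b. x b - mv P x b) = 0" unfolding z by simp
    qed
    show "mv P x = mv (Pm Q) x" using py_uniq[OF assms inQ orth] mv_Pm[OF assms] by simp
  qed
  have ex1: "\<exists>!P. adj P = P \<and> mmul P P = P \<and> range (mv P) = Q"
  proof (rule ex1I[of _ "Pm Q"])
    show "adj (Pm Q) = Pm Q \<and> mmul (Pm Q) (Pm Q) = Pm Q \<and> range (mv (Pm Q)) = Q"
      using sa idem rng by simp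
  next
    fix P assume "adj P = P \<and> mmul P P = P \<and> range (mv P) = Q"
    then show "P = Pm Q" by (rule uniq)
  qed
  have "adj (proj Q) = proj Q \<and> mmul (proj Q) (proj Q) = proj Q \<and> range (mv (proj Q)) = Q"
    unfolding proj_def by (rule theI'[OF ex1])
  then show "adj (proj Q) = proj Q" "mmul (proj Q) (proj Q) = proj Q" "range (mv (proj Q)) = Q" by auto
qed

lemma proj_pos: assumes "subsp Q" shows "positive_op (proj Q)"
  unfolding positive_op_def
proof
  fix \<psi>
  let ?P = "proj Q"
  have "cinner \<psi> (mv ?P \<psi>) = cinner \<psi> (mv (mmul ?P ?P) \<psi>)" using proj_facts(2)[OF assms] by simp
  also have "\<dots> = cinner (mv ?P \<psi>) (mv ?P \<psi>)"
    unfolding mv_mmul cinner_adj2[of \<psi> ?P] proj_facts(1)[OF assms] ..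
  finally have e: "cinner \<psi> (mv ?P \<psi>) = cinner (mv ?P \<psi>) (mv ?P \<psi>)" .
  show "cinner \<psi> (mv ?P \<psi>) \<in> \<real> \<and> 0 \<le> Re (cinner \<psi> (mv ?P \<psi>))"
    unfolding e using cinner_self_Re(1)[of "mv ?P \<psi>"] cinner_self_Re(2)[of "mv ?P \<psi>"]
    by (simp add: complex_is_Real_iff)
qed

lemma key:
  assumes "finite K" "positive_op \<rho>"
  shows "supp (\<lambda>a b. \<Sum>k\<in>K. sandwich (E k) \<rho> a b) = cspan {mv (E k) \<psi> | k \<psi>. k \<in> K \<and> \<psi> \<in> supp \<rho>}"
proof -
  define M where "M = (\<lambda>a b. \<Sum>k\<in>K. sandwich (E k) \<rho> a b)"
  define G where "G = {mv (E k) \<psi> | k \<psi>. k \<in> K \<and> \<psi> \<in> supp \<rho>}"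
  have h: "adj \<rho> = \<rho>" by (rule pos_herm[OF assms(2)])
  have mvM: "mv M x = (\<lambda>i. \<Sum>k\<in>K. mv (E k) (mv \<rho> (mv (adj (E k)) x)) i)" for x
    unfolding M_def mv_opsum mv_sandwich ..
  have sub1: "supp M \<subseteq> cspan G"
  proof
    fix v assume "v \<in> supp M"
    then obtain x where v: "v = mv M x" unfolding supp_def by auto
    show "v \<in> cspan G" unfolding v mvM
    proof (rule subsp_sum[OF subsp_cspan assms(1)])
      fix k assume k: "k \<in> K"
      have "mv \<rho> (mv (adj (E k)) x) \<in> supp \<rho>" unfolding supp_def by simp
      then have "mv (E k) (mv \<rho> (mv (adj (E k)) x)) \<in> G" unfolding G_def using k by auto
      then show "mv (E k) (mv \<rho> (mv (adj (E k)) x)) \<in> cspan G" by (rule subsetD[OF cspan_sup])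
    qed
  qed
  have Rsub: "subsp (supp M)" unfolding supp_def by (rule subsp_image[OF lin_mv]) (simp add: subsp_def)
  have gen: "g \<in> supp M" if "g \<in> G" for g
  proof -
    from that obtain k u where k: "k \<in> K" and g: "g = mv (E k) u" and u: "u \<in> supp \<rho>"
      unfolding G_def by blast
    from u obtain u0 where u0: "u = mv \<rho> u0" unfolding supp_def by auto
    obtain y where y: "y \<in> supp M" and yo: "\<forall>w\<in>supp M. cinner w (\<lambda>b. g b - y b) = 0"
      using decomp[OF Rsub, of g] by blast
    define z where "z = (\<lambda>b. g b - y b)"
    have mz: "mv M z \<in> supp M" unfolding supp_def by simp
    have "cinner (mv M z) z = 0" using yo mz unfolding z_def[symmetric] by (rule bspec)
    then have Mz: "cinner z (mv M z) = 0" using cinner_sym[of z "mv M z"] by simp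
    define q where "q j = cinner (mv (adj (E j)) z) (mv \<rho> (mv (adj (E j)) z))" for j
    have "cinner z (mv M z) = (\<Sum>j\<in>K. q j)" unfolding mvM cinner_sum_right q_def
      by (rule sum.cong[OF refl]) (simp add: cinner_adj2)
    then have s0: "(\<Sum>j\<in>K. q j) = 0" using Mz by simp
    have qnn: "0 \<le> Re (q j)" "Im (q j) = 0" for j
      using assms(2) unfolding positive_op_def q_def by (auto simp: complex_is_Real_iff)
    have "Re (\<Sum>j\<in>K. q j) = 0" using s0 by simp
    then have "(\<Sum>j\<in>K. Re (q j)) = 0" by simp
    then have all: "\<forall>j\<in>K. Re (q j) = 0"
      using sum_nonneg_eq_0_iff[OF assms(1), of "\<lambda>j. Re (q j)"] qnn(1) by simp
    then have qk: "q k = 0" using qnn(2)[of k] k by (simp add: complex_eq_iff)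
    then have rz: "mv \<rho> (mv (adj (E k)) z) = (\<lambda>_. 0)"
      unfolding q_def by (rule pos_null[OF assms(2)])
    have cg: "cinner z g = 0"
    proof -
      have "cinner z g = cinner (mv (adj (E k)) z) (mv \<rho> u0)" unfolding g u0 cinner_adj2 ..
      also have "\<dots> = cinner (mv \<rho> (mv (adj (E k)) z)) u0" unfolding cinner_adj2[of _ \<rho> u0] h ..
      also have "\<dots> = 0" unfolding rz by simp
      finally show ?thesis .
    qed
    have "cinner y z = 0" using yo y unfolding z_def[symmetric] by (rule bspec)
    then have cy: "cinner z y = 0" using cinner_sym[of z y] by simp
    have "cinner z z = cinner z g - cinner z y"
      using cinner_diff_right[of z g y] unfolding z_def[symmetric] .
    then have "cinner z z = 0" using cg cy by simp
    then have "z = (\<lambda>_. 0)" by (rule cinner_self_eq0)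
    then have "g = y" unfolding z_def by (simp add: fun_eq_iff)
    then show ?thesis using y by simp
  qed
  have sub2: "cspan G \<subseteq> supp M" by (rule cspan_least[OF Rsub]) (rule subsetI, rule gen)
  show ?thesis using sub1 sub2 unfolding M_def G_def by (rule equalityI)
qed

lemma cspan_Union: "cspan (\<Union>i\<in>I. cspan (A i)) = cspan (\<Union>i\<in>I. A i)"
proof
  show "cspan (\<Union>i\<in>I. cspan (A i)) \<subseteq> cspan (\<Union>i\<in>I. A i)"
  proof (rule cspan_least[OF subsp_cspan])
    show "(\<Union>i\<in>I. cspan (A i)) \<subseteq> cspan (\<Union>i\<in>I. A i)"
    proof
      fix x assume "x \<in> (\<Union>i\<in>I. cspan (A i))"
      then obtain i where i: "i \<in> I" "x \<in> cspan (A i)" by blast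
      have "A i \<subseteq> (\<Union>i\<in>I. A i)" using i(1) by blast
      then show "x \<in> cspan (\<Union>i\<in>I. A i)" using i(2) by (rule subsetD[OF cspan_mono])
    qed
  qed
  show "cspan (\<Union>i\<in>I. A i) \<subseteq> cspan (\<Union>i\<in>I. cspan (A i))"
  proof (rule cspan_mono, rule subsetI)
    fix x assume "x \<in> (\<Union>i\<in>I. A i)"
    then obtain i where i: "i \<in> I" "x \<in> A i" by blast
    have "x \<in> cspan (A i)" using i(2) by (rule subsetD[OF cspan_sup])
    then show "x \<in> (\<Union>i\<in>I. cspan (A i))" using i(1) by blast
  qed
qed

lemma cspan_img:
  "cspan {mv (E k) \<psi> | k \<psi>. k \<in> K \<and> \<psi> \<in> cspan X} = cspan {mv (E k) \<psi> | k \<psi>. k \<in> K \<and> \<psi> \<in> X}"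
proof
  let ?Y = "{mv (E k) \<psi> | k \<psi>. k \<in> K \<and> \<psi> \<in> X}"
  show "cspan {mv (E k) \<psi> | k \<psi>. k \<in> K \<and> \<psi> \<in> cspan X} \<subseteq> cspan ?Y"
  proof (rule cspan_least[OF subsp_cspan])
    show "{mv (E k) \<psi> | k \<psi>. k \<in> K \<and> \<psi> \<in> cspan X} \<subseteq> cspan ?Y"
    proof
      fix v assume "v \<in> {mv (E k) \<psi> | k \<psi>. k \<in> K \<and> \<psi> \<in> cspan X}"
      then obtain k \<psi> where v: "v = mv (E k) \<psi>" "k \<in> K" "\<psi> \<in> cspan X" by blast
      have "X \<subseteq> {x. mv (E k) x \<in> cspan ?Y}"
      proof
        fix x assume "x \<in> X"
        then have "mv (E k) x \<in> ?Y" using v(2) by blast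
        then have "mv (E k) x \<in> cspan ?Y" by (rule subsetD[OF cspan_sup])
        then show "x \<in> {x. mv (E k) x \<in> cspan ?Y}" by simp
      qed
      then have "cspan X \<subseteq> {x. mv (E k) x \<in> cspan ?Y}"
        by (rule cspan_least[OF subsp_preimage[OF lin_mv subsp_cspan]])
      then have "\<psi> \<in> {x. mv (E k) x \<in> cspan ?Y}" using v(3) by (rule subsetD)
      then show "v \<in> cspan ?Y" using v(1) by simp
    qed
  qed
  show "cspan ?Y \<subseteq> cspan {mv (E k) \<psi> | k \<psi>. k \<in> K \<and> \<psi> \<in> cspan X}"
  proof (rule cspan_mono, rule subsetI)
    fix v assume "v \<in> ?Y"
    then obtain k \<psi> where v: "v = mv (E k) \<psi>" "k \<in> K" "\<psi> \<in> X" by blast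
    have "\<psi> \<in> cspan X" using v(3) by (rule subsetD[OF cspan_sup])
    then show "v \<in> {mv (E k) \<psi> | k \<psi>. k \<in> K \<and> \<psi> \<in> cspan X}" using v(1,2) by blast
  qed
qed

lemma kraus_abs:
  fixes f :: "'v::finite op \<Rightarrow> 'v op"
  assumes "finite K" "\<forall>\<rho>\<in>dens. f \<rho> = (\<lambda>a b. \<Sum>k\<in>K. sandwich (E k) \<rho> a b)"
  shows "complete_abs f (\<lambda>Q. cspan {mv (E k) \<psi> | k \<psi>. k \<in> K \<and> \<psi> \<in> Q})"
  unfolding complete_abs_def
proof (intro allI impI)
  fix R :: "'v op set" assume R: "R \<subseteq> dens"
  have "alpha_s (f ` R) = cspan (\<Union>\<rho>\<in>R. supp (f \<rho>))" unfolding alpha_s_def by simp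
  also have "\<dots> = cspan (\<Union>\<rho>\<in>R. cspan {mv (E k) \<psi> | k \<psi>. k \<in> K \<and> \<psi> \<in> supp \<rho>})"
  proof (rule arg_cong[where f=cspan], rule SUP_cong[OF refl])
    fix \<rho> assume "\<rho> \<in> R"
    then have d: "\<rho> \<in> dens" using R by blast
    then have p: "positive_op \<rho>" unfolding dens_def by simp
    show "supp (f \<rho>) = cspan {mv (E k) \<psi> | k \<psi>. k \<in> K \<and> \<psi> \<in> supp \<rho>}"
      using assms(2) d key[OF assms(1) p, of E] by simp
  qed
  also have "\<dots> = cspan (\<Union>\<rho>\<in>R. {mv (E k) \<psi> | k \<psi>. k \<in> K \<and> \<psi> \<in> supp \<rho>})"
    by (rule cspan_Union)
  also have "\<dots> = cspan {mv (E k) \<psi> | k \<psi>. k \<in> K \<and> \<psi> \<in> (\<Union>\<rho>\<in>R. supp \<rho>)}"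
  proof (rule arg_cong[where f=cspan])
    show "(\<Union>\<rho>\<in>R. {mv (E k) \<psi> | k \<psi>. k \<in> K \<and> \<psi> \<in> supp \<rho>}) =
      {mv (E k) \<psi> | k \<psi>. k \<in> K \<and> \<psi> \<in> (\<Union>\<rho>\<in>R. supp \<rho>)}"
    proof (intro equalityI subsetI)
      fix v assume "v \<in> (\<Union>\<rho>\<in>R. {mv (E k) \<psi> | k \<psi>. k \<in> K \<and> \<psi> \<in> supp \<rho>})"
      then obtain \<rho> k \<psi> where "\<rho> \<in> R" "v = mv (E k) \<psi>" "k \<in> K" "\<psi> \<in> supp \<rho>" by auto
      then show "v \<in> {mv (E k) \<psi> | k \<psi>. k \<in> K \<and> \<psi> \<in> (\<Union>\<rho>\<in>R. supp \<rho>)}" by auto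
    next
      fix v assume "v \<in> {mv (E k) \<psi> | k \<psi>. k \<in> K \<and> \<psi> \<in> (\<Union>\<rho>\<in>R. supp \<rho>)}"
      then obtain \<rho> k \<psi> where "\<rho> \<in> R" "v = mv (E k) \<psi>" "k \<in> K" "\<psi> \<in> supp \<rho>" by auto
      then show "v \<in> (\<Union>\<rho>\<in>R. {mv (E k) \<psi> | k \<psi>. k \<in> K \<and> \<psi> \<in> supp \<rho>})" by auto
    qed
  qed
  also have "\<dots> = cspan {mv (E k) \<psi> | k \<psi>. k \<in> K \<and> \<psi> \<in> cspan (\<Union>\<rho>\<in>R. supp \<rho>)}"
    by (rule cspan_img[symmetric])
  finally show "alpha_s (f ` R) = cspan {mv (E k) \<psi> | k \<psi>. k \<in> K \<and> \<psi> \<in> alpha_s R}"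
    unfolding alpha_s_def .
qed

lemma complete_abs_cong:
  fixes f :: "'v::finite op \<Rightarrow> 'v op"
  assumes "complete_abs f g1" "\<And>Q. subsp Q \<Longrightarrow> g1 Q = g2 Q"
  shows "complete_abs f g2"
  unfolding complete_abs_def
proof (intro allI impI)
  fix R :: "'v op set" assume R: "R \<subseteq> dens"
  have "alpha_s (f ` R) = g1 (alpha_s R)" using assms(1) R unfolding complete_abs_def by blast
  also have "\<dots> = g2 (alpha_s R)" unfolding alpha_s_def by (rule assms(2)[OF subsp_cspan])
  finally show "alpha_s (f ` R) = g2 (alpha_s R)" .
qed

lemma sum_sel:
  fixes \<psi> :: "'v::finite bas \<Rightarrow> complex"
  shows "(\<Sum>j\<in>UNIV. (if C \<and> j = m then 1 else 0) * \<psi> j) = (if C then \<psi> m else 0)"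
proof (cases C)
  case True
  have "(\<Sum>j\<in>UNIV. (if C \<and> j = m then 1 else 0) * \<psi> j) = (\<Sum>j\<in>UNIV. if j = m then \<psi> j else 0)"
    by (rule sum.cong) (auto simp: True)
  then show ?thesis using True by simp
next
  case False then show ?thesis by simp
qed

definition Bk :: "'v set \<Rightarrow> 'v bas \<Rightarrow> 'v op" where
  "Bk W k = (\<lambda>a d. if a \<in> BW (- W) \<and> d = merge W k a then 1 else 0)"

lemma mv_Bk: "mv (Bk W k) \<psi> = (\<lambda>a. if a \<in> BW (- W) then \<psi> (merge W k a) else 0)"
  unfolding mv_def Bk_def by (simp only: sum_sel)

lemma sandwich_Bk:
  "sandwich (Bk W k) P a b = (if a \<in> BW (- W) \<and> b \<in> BW (- W) then P (merge W k a) (merge W k b) else 0)"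
proof -
  have e1: "mmul (Bk W k) P a c = (if a \<in> BW (- W) then P (merge W k a) c else 0)" for c
    unfolding mmul_def Bk_def by (simp only: sum_sel)
  have e2: "adj (Bk W k) c b = (if b \<in> BW (- W) \<and> c = merge W k b then 1 else 0)" for c
    unfolding adj_def Bk_def by simp
  have "sandwich (Bk W k) P a b = (\<Sum>c\<in>UNIV. mmul (Bk W k) P a c * adj (Bk W k) c b)"
    unfolding sandwich_def mmul_def[of "mmul (Bk W k) P" "adj (Bk W k)"] ..
  also have "\<dots> = (\<Sum>c\<in>UNIV. (if b \<in> BW (- W) \<and> c = merge W k b then 1 else 0) *
      (if a \<in> BW (- W) then P (merge W k a) c else 0))"
    unfolding e1 e2 by (rule sum.cong[OF refl], rule mult.commute)
  also have "\<dots> = (if b \<in> BW (- W) then (if a \<in> BW (- W) then P (merge W k a) (merge W k b) else 0) else 0)"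
    by (rule sum_sel)
  finally show ?thesis by simp
qed

lemma ptrace_eq: "ptrace W P = (\<lambda>a b. \<Sum>k\<in>BW W. sandwich (Bk W k) P a b)"
proof (intro ext)
  fix i j
  show "ptrace W P i j = (\<Sum>k\<in>BW W. sandwich (Bk W k) P i j)"
    by (cases "i \<in> BW (- W)"; cases "j \<in> BW (- W)") (simp_all add: ptrace_def sandwich_Bk)
qed

lemma cyl_ket:
  assumes "k \<in> BW W"
  shows "cyl W (ket0bra k) b j = (if (\<forall>v\<in>W. \<not> b v) \<and> j = merge W k b then 1 else 0)"
proof -
  have e1: "(rst W b = (\<lambda>_. False)) = (\<forall>v\<in>W. \<not> b v)" unfolding rst_def by (auto simp: fun_eq_iff)
  have e2: "((\<forall>v. v \<notin> W \<longrightarrow> b v = j v) \<and> rst W j = k) = (j = merge W k b)"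
    using assms unfolding rst_def merge_def BW_def by (auto simp: fun_eq_iff)
  show ?thesis unfolding cyl_def ket0bra_def
  proof (cases "\<forall>v. v \<notin> W \<longrightarrow> b v = j v")
    case True
    then show "(if \<forall>v. v \<notin> W \<longrightarrow> b v = j v
        then if rst W b = (\<lambda>_. False) \<and> rst W j = k then 1 else 0 else 0) =
      (if (\<forall>v\<in>W. \<not> b v) \<and> j = merge W k b then 1 else 0)"
      using e1 e2 by simp
  next
    case False
    have jn: "j \<noteq> merge W k b" using e2 False by blast
    have nm: "\<not> ((\<forall>v\<in>W. \<not> b v) \<and> j = merge W k b)" using jn by simp
    show "(if \<forall>v. v \<notin> W \<longrightarrow> b v = j v
        then if rst W b = (\<lambda>_. False) \<and> rst W j = k then 1 else 0 else 0) =
      (if (\<forall>v\<in>W. \<not> b v) \<and> j = merge W k b then 1 else 0)"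
      by (simp only: if_not_P[OF False] if_not_P[OF nm])
  qed
qed

lemma mv_cyl_ket:
  assumes "k \<in> BW W"
  shows "mv (cyl W (ket0bra k)) \<psi> = (\<lambda>b. if \<forall>v\<in>W. \<not> b v then \<psi> (merge W k b) else 0)"
  unfolding mv_def cyl_ket[OF assms] by (simp only: sum_sel)

lemma tens_Bk:
  assumes "k \<in> BW W"
  shows "tens0 W (mv (Bk W k) \<psi>) = mv (cyl W (ket0bra k)) \<psi>"
proof -
  have r1: "rst (- W) b \<in> BW (- W)" for b unfolding rst_def BW_def by auto
  have r2: "merge W k (rst (- W) b) = merge W k b" for b unfolding merge_def rst_def by (auto simp: fun_eq_iff)
  show ?thesis unfolding mv_cyl_ket[OF assms] mv_Bk tens0_def by (simp only: r1 r2 if_True)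
qed

lemma finite_BW: "finite (BW (W :: 'v::finite set))"
  by (rule finite_subset[OF subset_UNIV]) simp

lemma init_fs:
  assumes "subsp Q"
  shows "cspan {mv (cyl W (ket0bra k)) \<psi> | k \<psi>. k \<in> BW W \<and> \<psi> \<in> Q}
       = {tens0 W \<psi> | \<psi>. \<psi> \<in> supp (ptrace W (proj Q))}"
proof -
  have "supp (ptrace W (proj Q)) = cspan {mv (Bk W k) \<psi> | k \<psi>. k \<in> BW W \<and> \<psi> \<in> supp (proj Q)}"
    unfolding ptrace_eq by (rule key[OF finite_BW proj_pos[OF assms]])
  also have "supp (proj Q) = Q" unfolding supp_def by (rule proj_facts(3)[OF assms])
  finally have s: "supp (ptrace W (proj Q)) = cspan {mv (Bk W k) \<psi> | k \<psi>. k \<in> BW W \<and> \<psi> \<in> Q}" .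
  have im: "tens0 W ` {mv (Bk W k) \<psi> | k \<psi>. k \<in> BW W \<and> \<psi> \<in> Q}
      = {mv (cyl W (ket0bra k)) \<psi> | k \<psi>. k \<in> BW W \<and> \<psi> \<in> Q}"
  proof (intro equalityI subsetI)
    fix v assume "v \<in> tens0 W ` {mv (Bk W k) \<psi> | k \<psi>. k \<in> BW W \<and> \<psi> \<in> Q}"
    then obtain k \<psi> where v: "v = tens0 W (mv (Bk W k) \<psi>)" "k \<in> BW W" "\<psi> \<in> Q" by blast
    then have "v = mv (cyl W (ket0bra k)) \<psi>" using tens_Bk[OF v(2)] by simp
    then show "v \<in> {mv (cyl W (ket0bra k)) \<psi> | k \<psi>. k \<in> BW W \<and> \<psi> \<in> Q}" using v(2,3) by blast
  next
    fix v assume "v \<in> {mv (cyl W (ket0bra k)) \<psi> | k \<psi>. k \<in> BW W \<and> \<psi> \<in> Q}"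
    then obtain k \<psi> where v: "v = mv (cyl W (ket0bra k)) \<psi>" "k \<in> BW W" "\<psi> \<in> Q" by blast
    then have "v = tens0 W (mv (Bk W k) \<psi>)" using tens_Bk[OF v(2)] by simp
    moreover have "mv (Bk W k) \<psi> \<in> {mv (Bk W k) \<psi> | k \<psi>. k \<in> BW W \<and> \<psi> \<in> Q}" using v(2,3) by blast
    ultimately show "v \<in> tens0 W ` {mv (Bk W k) \<psi> | k \<psi>. k \<in> BW W \<and> \<psi> \<in> Q}" by (simp only: image_eqI)
  qed
  have "{tens0 W \<psi> | \<psi>. \<psi> \<in> supp (ptrace W (proj Q))} = tens0 W ` supp (ptrace W (proj Q))" by blast
  also have "\<dots> = cspan (tens0 W ` {mv (Bk W k) \<psi> | k \<psi>. k \<in> BW W \<and> \<psi> \<in> Q})"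
    unfolding s by (rule cspan_image[OF lin_tens0])
  also have "\<dots> = cspan {mv (cyl W (ket0bra k)) \<psi> | k \<psi>. k \<in> BW W \<and> \<psi> \<in> Q}" unfolding im ..
  finally show ?thesis by simp
qed

theorem mainTheorem17:
  fixes W :: "'v::finite set" and U :: "'v op" and P :: "'v state set"
    and S :: "'v prog" and K :: "'k set" and E :: "'k \<Rightarrow> 'v op"
  shows "complete_abs (sem (Skip :: 'v prog)) (\<lambda>Q. Q)
    \<and> complete_abs (sem (Init W))
           (\<lambda>Q. {tens0 W \<psi> | \<psi>. \<psi> \<in> supp (ptrace W (proj Q))})
    \<and> (unitary_op (cyl W U) \<longrightarrow>
           complete_abs (sem (Apply W U)) (\<lambda>Q. {mv (cyl W U) \<psi> | \<psi>. \<psi> \<in> Q}))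
    \<and> (local_subspace W P \<longrightarrow>
           complete_abs (sem (Assert W P)) (\<lambda>Q. cspan {mv (cyl W (proj P)) \<psi> | \<psi>. \<psi> \<in> Q}))
    \<and> (wf_prog S \<and> finite K \<and>
          (\<forall>\<rho>\<in>dens. sem S \<rho> = (\<lambda>a b. \<Sum>k\<in>K. sandwich (E k) \<rho> a b)) \<longrightarrow>
           complete_abs (sem S) (\<lambda>Q. cspan {mv (E k) \<psi> | k \<psi>. k \<in> K \<and> \<psi> \<in> Q}))"
proof (intro conjI impI)
  show "complete_abs (sem (Skip :: 'v prog)) (\<lambda>Q. Q)"
    unfolding complete_abs_def
  proof (intro allI impI)
    fix R :: "'v op set"
    have "sem (Skip :: 'v prog) = (\<lambda>\<rho>. \<rho>)" by (rule ext) simp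
    then show "alpha_s (sem (Skip :: 'v prog) ` R) = alpha_s R" by simp
  qed
next
  have k1: "complete_abs (sem (Init W)) (\<lambda>Q. cspan {mv (cyl W (ket0bra k)) \<psi> | k \<psi>. k \<in> BW W \<and> \<psi> \<in> Q})"
    by (rule kraus_abs) (simp_all add: finite_BW)
  show "complete_abs (sem (Init W)) (\<lambda>Q. {tens0 W \<psi> | \<psi>. \<psi> \<in> supp (ptrace W (proj Q))})"
    using k1 by (rule complete_abs_cong) (rule init_fs)
next
  have k1: "complete_abs (sem (Apply W U)) (\<lambda>Q. cspan {mv (cyl W U) \<psi> | (k::unit) \<psi>. k \<in> {()} \<and> \<psi> \<in> Q})"
    by (rule kraus_abs) simp_all
  show "complete_abs (sem (Apply W U)) (\<lambda>Q. {mv (cyl W U) \<psi> | \<psi>. \<psi> \<in> Q})"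
    using k1
  proof (rule complete_abs_cong)
    fix Q :: "'v state set" assume Q: "subsp Q"
    have e1: "{mv (cyl W U) \<psi> | (k::unit) \<psi>. k \<in> {()} \<and> \<psi> \<in> Q} = mv (cyl W U) ` Q" by auto
    have e2: "{mv (cyl W U) \<psi> | \<psi>. \<psi> \<in> Q} = mv (cyl W U) ` Q" by auto
    show "cspan {mv (cyl W U) \<psi> | (k::unit) \<psi>. k \<in> {()} \<and> \<psi> \<in> Q} = {mv (cyl W U) \<psi> | \<psi>. \<psi> \<in> Q}"
      unfolding e1 e2 by (rule cspan_subsp[OF subsp_image[OF lin_mv Q]])
  qed
next
  have k1: "complete_abs (sem (Assert W P))
      (\<lambda>Q. cspan {mv (cyl W (proj P)) \<psi> | (k::unit) \<psi>. k \<in> {()} \<and> \<psi> \<in> Q})"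
    by (rule kraus_abs) simp_all
  show "complete_abs (sem (Assert W P)) (\<lambda>Q. cspan {mv (cyl W (proj P)) \<psi> | \<psi>. \<psi> \<in> Q})"
    using k1
  proof (rule complete_abs_cong)
    fix Q :: "'v state set" assume Q: "subsp Q"
    have e1: "{mv (cyl W (proj P)) \<psi> | (k::unit) \<psi>. k \<in> {()} \<and> \<psi> \<in> Q} = {mv (cyl W (proj P)) \<psi> | \<psi>. \<psi> \<in> Q}"
      by auto
    show "cspan {mv (cyl W (proj P)) \<psi> | (k::unit) \<psi>. k \<in> {()} \<and> \<psi> \<in> Q} = cspan {mv (cyl W (proj P)) \<psi> | \<psi>. \<psi> \<in> Q}"
      unfolding e1 ..
  qed
next
  assume h: "wf_prog S \<and> finite K \<and> (\<forall>\<rho>\<in>dens. sem S \<rho> = (\<lambda>a b. \<Sum>k\<in>K. sandwich (E k) \<rho> a b))"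
  show "complete_abs (sem S) (\<lambda>Q. cspan {mv (E k) \<psi> | k \<psi>. k \<in> K \<and> \<psi> \<in> Q})"
    using h by (intro kraus_abs) simp_all
qed

end
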